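(* Let $T:\mathcal L_n\rightrightarrows\mathcal L_n$ be defined by $z\in T(y)\iff P_{\mathcal N}(z)+P_{\mathcal M}(y)\in(\mathcal F+N_{\mathcal C})(P_{\mathcal N}(y)+P_{\mathcal M}(z))$, and let $A:\mathcal L_n\to\mathcal L_n$ be the symmetric positive definite invertible linear map $A(u)=P_{\mathcal N}(u)+rP_{\mathcal M}(u)$. Then the iterations of the IPHA are equivalent to those of the HIPPM applied to the operator $ATA$ with $\varepsilon_k=0$ and $c_k=r^{-1}$ for all $k$ (with the same choices of $\sigma_k$ and $\tau_k$), under the identification $z_k=x_k-r^{-1}w_k$ (equivalently $x_k=P_{\mathcal N}(z_k)$, $w_k=-rP_{\mathcal M}(z_k)$): an IPHA step from $(x_k,w_k)$ corresponds to an HIPPM step from $z_k$, the two stopping tests coincide, and the HIPPM update equals $z_{k+1}=x_{k+1}-r^{-1}w_{k+1}$.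
   Context: Multistage setting: $\Xi$ is a finite set of scenarios $\xi=(\xi_1,\dots,\xi_N)$ with probabilities $p(\xi)>0$; $n=n_1+\dots+n_N$. $\mathcal L_n$ is the space of functions $x:\Xi\to\mathbb R^n$, $x(\xi)=(x_1(\xi),\dots,x_N(\xi))$, $x_j(\xi)\in\mathbb R^{n_j}$, with inner product $\langle x,w\rangle=\sum_{\xi}p(\xi)\sum_{j}\langle x_j(\xi),w_j(\xi)\rangle$. $\mathcal N=\{x\in\mathcal L_n: x_j(\xi)\text{ does not depend on }\xi_j,\dots,\xi_N\}$, $\mathcal M=\mathcal N^\perp$, with orthogonal projections $P_{\mathcal N},P_{\mathcal M}$. For each $\xi$, $C(\xi)\subset\mathbb R^n$ is nonempty closed convex and $F(\cdot,\xi):\mathbb R^n\to\mathbb R^n$ is continuous monotone; $\mathcal C=\{x\in\mathcal L_n: x(\xi)\in C(\xi)\ \forall\xi\}$ and $\mathcal F(x)(\xi)=F(x(\xi),\xi)$. $r>0$ fixed. IPHA: choose $x_0\in\mathcal N$, $w_0\in\mathcal M$, $\bar\sigma\in(0,1)$, $\theta\in(0,1)$. At iteration $k$: choose $\sigma_k\in[0,\bar\sigma)$, find $\hat x^k,\hat w^k\in\mathcal L_n$ with $r(x_k(\xi)-\hat x^k(\xi))-w_k(\xi)\in F(\hat w^k(\xi),\xi)+N_{C(\xi)}(\hat w^k(\xi))$ for all $\xi$, $\delta^k=\hat w^k-\hat x^k$, and $\|\delta^k\|^2\le\sigma_k^2(\|a_k\|^2+\|b_k\|^2)$, where $a_k=x_k-P_{\mathcal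 N}(\hat x^k)+P_{\mathcal M}(\hat w^k)$, $b_k=x_k-P_{\mathcal N}(\hat w^k)+P_{\mathcal M}(\hat x^k)$. If $b_k=0$ stop; otherwise choose $\tau_k\in[1-\theta,1+\theta]$, set $\alpha_k=\langle a_k,b_k\rangle/\|a_k\|^2$, $x_{k+1}=x_k-\tau_k\alpha_k(x_k-P_{\mathcal N}(\hat x^k))$, $w_{k+1}=w_k+\tau_k\alpha_k rP_{\mathcal M}(\hat w^k)$. HIPPM (hybrid inexact proximal point method) for a maximal monotone operator $S$ on a Hilbert space, here with $\varepsilon_k=0$ and constant $c_k=c>0$: from $z_k$, choose $\sigma_k\in[0,\bar\sigma)$ and find $\hat z^k,\hat v^k$ with $\hat v^k\in S(\hat z^k)$, $\delta^k=c\hat v^k+\hat z^k-z_k$, $\|\delta^k\|^2\le\sigma_k^2(\|c\hat v^k\|^2+\|\hat z^k-z_k\|^2)$. Stop if $z_k=\hat z^k$; otherwise choose $\tau_k\in[1-\theta,1+\theta]$ and set $z_{k+1}=z_k-\tau_k a_k\hat v^k$ with $a_k=\langle\hat v^k,z_k-\hat z^k\rangle/\|\hat v^k\|^2$. *)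

theory Defs
  imports "HOL-Analysis.Analysis" "HOL-Library.Function_Algebras"
begin

text \<open>Scenarios are lists xi = [xi_1,...,xi_N] (stage j of the paper is list position j-1).
  An element of L_n is a function from scenarios to real^'n which vanishes outside Xi
  (so it is determined by its values on Xi). Each coordinate c of real^'n belongs to a stage
  stage c (0-based, stage c < N); the block x_j(xi) of the paper is the family of coordinates
  c with stage c = j-1. Pointwise addition / subtraction of functions come from the library;
  scalar multiplication is sc.\<close>

type_synonym ('b,'n) Lvec = "'b list \<Rightarrow> real^'n"

definition sc :: "real \<Rightarrow> ('b,'n::finite) Lvec \<Rightarrow> ('b,'n) Lvec" where
  "sc t x = (\<lambda>\<xi>. t *\<^sub>R x \<xi>)"

definition Lspace :: "'b list set \<Rightarrow> ('b,'n::finite) Lvec set" where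
  "Lspace Xi = {x. \<forall>\<xi>. \<xi> \<notin> Xi \<longrightarrow> x \<xi> = 0}"

definition ipL :: "'b list set \<Rightarrow> ('b list \<Rightarrow> real) \<Rightarrow> ('b,'n::finite) Lvec \<Rightarrow> ('b,'n) Lvec \<Rightarrow> real" where
  "ipL Xi p x w = (\<Sum>\<xi>\<in>Xi. p \<xi> * (x \<xi> \<bullet> w \<xi>))"

text \<open>Nonanticipative subspace N: the stage-j block does not depend on xi_j,...,xi_N,
  i.e. coordinate c only depends on the first stage c entries of the scenario.\<close>
definition NA :: "'b list set \<Rightarrow> ('n::finite \<Rightarrow> nat) \<Rightarrow> ('b,'n) Lvec set" where
  "NA Xi stage = {x \<in> Lspace Xi. \<forall>\<xi>\<in>Xi. \<forall>\<xi>'\<in>Xi. \<forall>c.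
      take (stage c) \<xi> = take (stage c) \<xi>' \<longrightarrow> x \<xi> $ c = x \<xi>' $ c}"

definition MA :: "'b list set \<Rightarrow> ('b list \<Rightarrow> real) \<Rightarrow> ('n::finite \<Rightarrow> nat) \<Rightarrow> ('b,'n) Lvec set" where
  "MA Xi p stage = {w \<in> Lspace Xi. \<forall>x\<in>NA Xi stage. ipL Xi p x w = 0}"

definition projL :: "'b list set \<Rightarrow> ('b list \<Rightarrow> real) \<Rightarrow> ('b,'n::finite) Lvec set
    \<Rightarrow> ('b,'n) Lvec \<Rightarrow> ('b,'n) Lvec" where
  "projL Xi p V u = (THE v. v \<in> V \<and> (\<forall>y\<in>V. ipL Xi p (u - v) y = 0))"

definition PN :: "'b list set \<Rightarrow> ('b list \<Rightarrow> real) \<Rightarrow> ('n::finite \<Rightarrow> nat) \<Rightarrow> ('b,'n) Lvec \<Rightarrow> ('b,'n) Lvec" where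
  "PN Xi p stage = projL Xi p (NA Xi stage)"

definition PM :: "'b list set \<Rightarrow> ('b list \<Rightarrow> real) \<Rightarrow> ('n::finite \<Rightarrow> nat) \<Rightarrow> ('b,'n) Lvec \<Rightarrow> ('b,'n) Lvec" where
  "PM Xi p stage = projL Xi p (MA Xi p stage)"

definition normal_cone :: "'v set \<Rightarrow> ('v \<Rightarrow> 'v \<Rightarrow> real) \<Rightarrow> 'v set \<Rightarrow> 'v \<Rightarrow> ('v::minus) set" where
  "normal_cone H ip K u = (if u \<in> K then {v \<in> H. \<forall>c\<in>K. ip v (c - u) \<le> 0} else {})"

definition Ccal :: "'b list set \<Rightarrow> ('b list \<Rightarrow> (real^'n::finite) set) \<Rightarrow> ('b,'n) Lvec set" where
  "Ccal Xi C = {x \<in> Lspace Xi. \<forall>\<xi>\<in>Xi. x \<xi> \<in> C \<xi>}"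

definition Fcal :: "'b list set \<Rightarrow> (real^'n::finite \<Rightarrow> 'b list \<Rightarrow> real^'n) \<Rightarrow> ('b,'n) Lvec \<Rightarrow> ('b,'n) Lvec" where
  "Fcal Xi F x = (\<lambda>\<xi>. if \<xi> \<in> Xi then F (x \<xi>) \<xi> else 0)"

definition FNC :: "'b list set \<Rightarrow> ('b list \<Rightarrow> real) \<Rightarrow> ('b list \<Rightarrow> (real^'n::finite) set)
    \<Rightarrow> (real^'n \<Rightarrow> 'b list \<Rightarrow> real^'n) \<Rightarrow> ('b,'n) Lvec \<Rightarrow> ('b,'n) Lvec set" where
  "FNC Xi p C F u = (\<lambda>v. Fcal Xi F u + v) ` normal_cone (Lspace Xi) (ipL Xi p) (Ccal Xi C) u"

definition Top :: "'b list set \<Rightarrow> ('b list \<Rightarrow> real) \<Rightarrow> ('n::finite \<Rightarrow> nat) \<Rightarrow> ('b list \<Rightarrow> (real^'n) set)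
    \<Rightarrow> (real^'n \<Rightarrow> 'b list \<Rightarrow> real^'n) \<Rightarrow> ('b,'n) Lvec \<Rightarrow> ('b,'n) Lvec set" where
  "Top Xi p stage C F y = (if y \<in> Lspace Xi then
      {z \<in> Lspace Xi. PN Xi p stage z + PM Xi p stage y
          \<in> FNC Xi p C F (PN Xi p stage y + PM Xi p stage z)} else {})"

definition Aop :: "'b list set \<Rightarrow> ('b list \<Rightarrow> real) \<Rightarrow> ('n::finite \<Rightarrow> nat) \<Rightarrow> real \<Rightarrow> ('b,'n) Lvec \<Rightarrow> ('b,'n) Lvec" where
  "Aop Xi p stage r u = PN Xi p stage u + sc r (PM Xi p stage u)"

definition ATA :: "'b list set \<Rightarrow> ('b list \<Rightarrow> real) \<Rightarrow> ('n::finite \<Rightarrow> nat) \<Rightarrow> ('b list \<Rightarrow> (real^'n) set)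
    \<Rightarrow> (real^'n \<Rightarrow> 'b list \<Rightarrow> real^'n) \<Rightarrow> real \<Rightarrow> ('b,'n) Lvec \<Rightarrow> ('b,'n) Lvec set" where
  "ATA Xi p stage C F r z = Aop Xi p stage r ` Top Xi p stage C F (Aop Xi p stage r z)"

definition ipha_a where
  "ipha_a Xi p stage x xh wh = x - PN Xi p stage xh + PM Xi p stage wh"
definition ipha_b where
  "ipha_b Xi p stage x xh wh = x - PN Xi p stage wh + PM Xi p stage xh"

definition ipha_ok :: "'b list set \<Rightarrow> ('b list \<Rightarrow> real) \<Rightarrow> ('n::finite \<Rightarrow> nat) \<Rightarrow> ('b list \<Rightarrow> (real^'n) set)
    \<Rightarrow> (real^'n \<Rightarrow> 'b list \<Rightarrow> real^'n) \<Rightarrow> real \<Rightarrow> real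
    \<Rightarrow> ('b,'n) Lvec \<Rightarrow> ('b,'n) Lvec \<Rightarrow> ('b,'n) Lvec \<Rightarrow> ('b,'n) Lvec \<Rightarrow> bool" where
  "ipha_ok Xi p stage C F r \<sigma> x w xh wh \<longleftrightarrow>
     xh \<in> Lspace Xi \<and> wh \<in> Lspace Xi \<and>
     (\<forall>\<xi>\<in>Xi. r *\<^sub>R (x \<xi> - xh \<xi>) - w \<xi>
         \<in> (\<lambda>v. F (wh \<xi>) \<xi> + v) ` normal_cone UNIV (\<bullet>) (C \<xi>) (wh \<xi>)) \<and>
     (let \<delta> = wh - xh; a = ipha_a Xi p stage x xh wh; b = ipha_b Xi p stage x xh wh in
        ipL Xi p \<delta> \<delta> \<le> \<sigma>\<^sup>2 * (ipL Xi p a a + ipL Xi p b b))"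

definition ipha_stop where
  "ipha_stop Xi p stage x xh wh \<longleftrightarrow> ipha_b Xi p stage x xh wh = 0"

definition ipha_update where
  "ipha_update Xi p stage r \<tau> x w xh wh =
     (let a = ipha_a Xi p stage x xh wh; b = ipha_b Xi p stage x xh wh;
          \<alpha> = ipL Xi p a b / ipL Xi p a a in
      (x - sc (\<tau> * \<alpha>) (x - PN Xi p stage xh), w + sc (\<tau> * \<alpha> * r) (PM Xi p stage wh)))"

definition hippm_ok :: "('b,'n::finite) Lvec set \<Rightarrow> (('b,'n) Lvec \<Rightarrow> ('b,'n) Lvec \<Rightarrow> real)
    \<Rightarrow> (('b,'n) Lvec \<Rightarrow> ('b,'n) Lvec set) \<Rightarrow> real \<Rightarrow> real
    \<Rightarrow> ('b,'n) Lvec \<Rightarrow> ('b,'n) Lvec \<Rightarrow> ('b,'n) Lvec \<Rightarrow> bool" where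
  "hippm_ok H ip S c \<sigma> z zh vh \<longleftrightarrow>
     zh \<in> H \<and> vh \<in> H \<and> vh \<in> S zh \<and>
     (let \<delta> = sc c vh + zh - z in
        ip \<delta> \<delta> \<le> \<sigma>\<^sup>2 * (ip (sc c vh) (sc c vh) + ip (zh - z) (zh - z)))"

definition hippm_stop where
  "hippm_stop z zh \<longleftrightarrow> z = zh"

definition hippm_update where
  "hippm_update ip \<tau> z zh vh =
     (let ak = ip vh (z - zh) / ip vh vh in z - sc (\<tau> * ak) vh)"

end

theory Submission
  imports Defs
begin

lemma sc_apply[simp]: "sc t x \<xi> = t *\<^sub>R x \<xi>" by (simp add: sc_def)

locale setting =
  fixes Xi :: "'b list set" and p :: "'b list \<Rightarrow> real" and stage :: "'n::finite \<Rightarrow> nat"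
  assumes fin: "finite Xi" and pos: "\<forall>\<xi>\<in>Xi. p \<xi> > 0"
begin

abbreviation L where "L \<equiv> (Lspace Xi :: ('b,'n) Lvec set)"
abbreviation ip where "ip \<equiv> (ipL Xi p :: ('b,'n) Lvec \<Rightarrow> _)"

lemma L_add[simp]: "a \<in> L \<Longrightarrow> b \<in> L \<Longrightarrow> a + b \<in> L" by (simp add: Lspace_def)
lemma L_diff[simp]: "a \<in> L \<Longrightarrow> b \<in> L \<Longrightarrow> a - b \<in> L" by (simp add: Lspace_def)
lemma L_uminus[simp]: "a \<in> L \<Longrightarrow> - a \<in> L" by (simp add: Lspace_def)
lemma L_sc[simp]: "a \<in> L \<Longrightarrow> sc t a \<in> L" by (simp add: Lspace_def)
lemma L_zero[simp]: "0 \<in> L" by (simp add: Lspace_def)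

lemma ip_sym: "ip a b = ip b a" by (simp add: ipL_def inner_commute)
lemma ip_add1: "ip (a + b) c = ip a c + ip b c"
  by (simp add: ipL_def inner_add_left distrib_left sum.distrib)
lemma ip_diff1: "ip (a - b) c = ip a c - ip b c"
  by (simp add: ipL_def inner_diff_left right_diff_distrib sum_subtractf)
lemma ip_sc1: "ip (sc t a) c = t * ip a c"
  by (simp add: ipL_def sum_distrib_left algebra_simps)
lemma ip_add2: "ip c (a + b) = ip c a + ip c b" by (metis ip_sym ip_add1)
lemma ip_diff2: "ip c (a - b) = ip c a - ip c b" by (metis ip_sym ip_diff1)
lemma ip_sc2: "ip c (sc t a) = t * ip c a" by (metis ip_sym ip_sc1)
lemma ip_uminus: "ip (- a) (- b) = ip a b"
  by (simp add: ipL_def)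

lemma ip_zero: "a \<in> L \<Longrightarrow> ip a a = 0 \<Longrightarrow> a = 0"
proof -
  assume aL: "a \<in> L" and z: "ip a a = 0"
  have nn: "\<forall>\<xi>\<in>Xi. 0 \<le> p \<xi> * (a \<xi> \<bullet> a \<xi>)" using pos by (simp add: less_imp_le)
  have "\<forall>\<xi>\<in>Xi. p \<xi> * (a \<xi> \<bullet> a \<xi>) = 0"
    using z sum_nonneg_eq_0_iff[OF fin, of "\<lambda>\<xi>. p \<xi> * (a \<xi> \<bullet> a \<xi>)"] nn unfolding ipL_def by blast
  hence "\<forall>\<xi>\<in>Xi. a \<xi> = 0" using pos by fastforce
  thus "a = 0" using aL unfolding Lspace_def fun_eq_iff by auto
qed

lemma NA_L: "x \<in> NA Xi stage \<Longrightarrow> x \<in> L" by (simp add: NA_def)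
lemma MA_L: "x \<in> MA Xi p stage \<Longrightarrow> x \<in> L" by (simp add: MA_def)

lemma NA_iff: "x \<in> NA Xi stage \<longleftrightarrow> x \<in> L \<and> (\<forall>\<xi>\<in>Xi. \<forall>\<xi>'\<in>Xi. \<forall>c.
      take (stage c) \<xi> = take (stage c) \<xi>' \<longrightarrow> x \<xi> $ c = x \<xi>' $ c)"
  by (simp add: NA_def)
lemma NA_add[simp]: assumes "a \<in> NA Xi stage" "b \<in> NA Xi stage" shows "a + b \<in> NA Xi stage"
proof -
  have A: "\<forall>\<xi>\<in>Xi. \<forall>\<xi>'\<in>Xi. \<forall>c. take (stage c) \<xi> = take (stage c) \<xi>' \<longrightarrow> a \<xi> $ c = a \<xi>' $ c"
   and B: "\<forall>\<xi>\<in>Xi. \<forall>\<xi>'\<in>Xi. \<forall>c. take (stage c) \<xi> = take (stage c) \<xi>' \<longrightarrow> b \<xi> $ c = b \<xi>' $ c"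
   and L: "a \<in> L" "b \<in> L"
    using assms unfolding NA_iff by blast+
  show ?thesis unfolding NA_iff
    by (intro conjI L_add L ballI allI impI) (metis A B plus_fun_apply vector_add_component)
qed
lemma NA_sc[simp]: assumes "a \<in> NA Xi stage" shows "sc t a \<in> NA Xi stage"
proof -
  have A: "\<forall>\<xi>\<in>Xi. \<forall>\<xi>'\<in>Xi. \<forall>c. take (stage c) \<xi> = take (stage c) \<xi>' \<longrightarrow> a \<xi> $ c = a \<xi>' $ c"
   and L: "a \<in> L"
    using assms unfolding NA_iff by blast+
  show ?thesis unfolding NA_iff
    by (intro conjI L_sc L ballI allI impI) (metis A sc_apply vector_scaleR_component)
qed
lemma NA_uminus[simp]: assumes "a \<in> NA Xi stage" shows "- a \<in> NA Xi stage"
proof -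
  have "- a = sc (-1) a" by (simp add: fun_eq_iff)
  thus ?thesis using assms by simp
qed
lemma NA_diff[simp]: "a \<in> NA Xi stage \<Longrightarrow> b \<in> NA Xi stage \<Longrightarrow> a - b \<in> NA Xi stage"
  using NA_add[of a "- b"] by simp
lemma MA_add[simp]: "a \<in> MA Xi p stage \<Longrightarrow> b \<in> MA Xi p stage \<Longrightarrow> a + b \<in> MA Xi p stage"
  by (auto simp: MA_def ip_add2)
lemma MA_diff[simp]: "a \<in> MA Xi p stage \<Longrightarrow> b \<in> MA Xi p stage \<Longrightarrow> a - b \<in> MA Xi p stage"
  by (auto simp: MA_def ip_diff2)
lemma MA_sc[simp]: "a \<in> MA Xi p stage \<Longrightarrow> sc t a \<in> MA Xi p stage"
  by (auto simp: MA_def ip_sc2)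

lemma class_sum_zero:
  fixes g :: "'b list \<Rightarrow> 'k" and f v :: "'b list \<Rightarrow> real"
  assumes fc: "\<forall>\<xi>\<in>Xi. \<forall>\<xi>'\<in>Xi. g \<xi> = g \<xi>' \<longrightarrow> f \<xi> = f \<xi>'"
  shows "(\<Sum>\<xi>\<in>Xi. p \<xi> * f \<xi> * (v \<xi> - (\<Sum>\<xi>'\<in>{\<xi>'\<in>Xi. g \<xi>' = g \<xi>}. p \<xi>' * v \<xi>')
            / (\<Sum>\<xi>'\<in>{\<xi>'\<in>Xi. g \<xi>' = g \<xi>}. p \<xi>'))) = 0"
proof -
  let ?h = "\<lambda>\<xi>. p \<xi> * f \<xi> * (v \<xi> - (\<Sum>\<xi>'\<in>{\<xi>'\<in>Xi. g \<xi>' = g \<xi>}. p \<xi>' * v \<xi>')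
            / (\<Sum>\<xi>'\<in>{\<xi>'\<in>Xi. g \<xi>' = g \<xi>}. p \<xi>'))"
  have "sum ?h Xi = (\<Sum>k\<in>g ` Xi. sum ?h {\<xi>\<in>Xi. g \<xi> = k})"
    by (rule sum.image_gen[OF fin])
  also have "\<dots> = 0"
  proof (rule sum.neutral, rule ballI)
    fix k assume "k \<in> g ` Xi"
    then obtain \<xi>0 where x0: "\<xi>0 \<in> Xi" "g \<xi>0 = k" by auto
    let ?K = "{\<xi>\<in>Xi. g \<xi> = k}"
    define S where "S = (\<Sum>\<xi>'\<in>?K. p \<xi>' * v \<xi>')"
    define P where "P = (\<Sum>\<xi>'\<in>?K. p \<xi>')"
    have Ppos: "P > 0" unfolding P_def
      using fin pos x0 by (intro sum_pos2[of _ \<xi>0]) auto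
    have eqf: "f \<xi> = f \<xi>0" if "\<xi> \<in> ?K" for \<xi> using fc x0 that by blast
    have eqK: "{\<xi>'\<in>Xi. g \<xi>' = g \<xi>} = ?K" if "\<xi> \<in> ?K" for \<xi> using that by auto
    have "sum ?h ?K = (\<Sum>\<xi>\<in>?K. f \<xi>0 * (p \<xi> * v \<xi>) - f \<xi>0 * (S / P) * p \<xi>)"
    proof (rule sum.cong[OF refl])
      fix \<xi> assume "\<xi> \<in> ?K"
      thus "?h \<xi> = f \<xi>0 * (p \<xi> * v \<xi>) - f \<xi>0 * (S / P) * p \<xi>"
        unfolding eqf[OF \<open>\<xi> \<in> ?K\<close>] eqK[OF \<open>\<xi> \<in> ?K\<close>] S_def[symmetric] P_def[symmetric]
        by (simp add: algebra_simps)
    qed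
    also have "\<dots> = f \<xi>0 * S - f \<xi>0 * (S / P) * P"
      by (simp add: sum_subtractf sum_distrib_left S_def P_def)
    also have "\<dots> = 0" using Ppos by simp
    finally show "sum ?h ?K = 0" .
  qed
  finally show ?thesis .
qed

definition E :: "('b,'n) Lvec \<Rightarrow> ('b,'n) Lvec" where
  "E u = (\<lambda>\<xi>. if \<xi> \<in> Xi then (\<chi> c. (\<Sum>\<xi>'\<in>{\<xi>'\<in>Xi. take (stage c) \<xi>' = take (stage c) \<xi>}. p \<xi>' * u \<xi>' $ c)
       / (\<Sum>\<xi>'\<in>{\<xi>'\<in>Xi. take (stage c) \<xi>' = take (stage c) \<xi>}. p \<xi>')) else 0)"

lemma E_NA: "E u \<in> NA Xi stage"
  unfolding NA_def Lspace_def E_def by auto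

lemma E_MA: assumes uL: "u \<in> L" shows "u - E u \<in> MA Xi p stage"
proof -
  have "ip x (u - E u) = 0" if xN: "x \<in> NA Xi stage" for x
  proof -
    have "ip x (u - E u) = (\<Sum>\<xi>\<in>Xi. \<Sum>c\<in>UNIV. p \<xi> * x \<xi> $ c * (u \<xi> $ c - E u \<xi> $ c))"
      unfolding ipL_def inner_vec_def by (simp add: sum_distrib_left algebra_simps)
    also have "\<dots> = (\<Sum>c\<in>UNIV. \<Sum>\<xi>\<in>Xi. p \<xi> * x \<xi> $ c * (u \<xi> $ c - E u \<xi> $ c))"
      by (rule sum.swap)
    also have "\<dots> = 0"
    proof (rule sum.neutral, rule ballI)
      fix c
      have "(\<Sum>\<xi>\<in>Xi. p \<xi> * x \<xi> $ c * (u \<xi> $ c - E u \<xi> $ c)) =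
        (\<Sum>\<xi>\<in>Xi. p \<xi> * x \<xi> $ c * (u \<xi> $ c - (\<Sum>\<xi>'\<in>{\<xi>'\<in>Xi. take (stage c) \<xi>' = take (stage c) \<xi>}. p \<xi>' * u \<xi>' $ c)
            / (\<Sum>\<xi>'\<in>{\<xi>'\<in>Xi. take (stage c) \<xi>' = take (stage c) \<xi>}. p \<xi>')))"
        by (rule sum.cong) (auto simp: E_def)
      also have "\<dots> = 0"
        by (rule class_sum_zero) (use xN in \<open>unfold NA_iff, blast\<close>)
      finally show "(\<Sum>\<xi>\<in>Xi. p \<xi> * x \<xi> $ c * (u \<xi> $ c - E u \<xi> $ c)) = 0" .
    qed
    finally show ?thesis .
  qed
  moreover have "u - E u \<in> L" using uL E_NA NA_L by simp
  ultimately show ?thesis by (simp add: MA_def)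
qed


abbreviation PNo where "PNo \<equiv> PN Xi p stage"
abbreviation PMo where "PMo \<equiv> PM Xi p stage"
abbreviation NAs where "NAs \<equiv> NA Xi stage"
abbreviation MAs where "MAs \<equiv> MA Xi p stage"

lemma PN_char: assumes "u \<in> L" "n \<in> NAs" "u - n \<in> MAs" shows "PNo u = n"
  unfolding PN_def projL_def
proof (rule the_equality)
  show "n \<in> NAs \<and> (\<forall>y\<in>NAs. ip (u - n) y = 0)"
    using assms by (auto simp: MA_def ip_sym)
next
  fix v assume v: "v \<in> NAs \<and> (\<forall>y\<in>NAs. ip (u - v) y = 0)"
  have h: "ip (n - v) y = 0" if "y \<in> NAs" for y
  proof -
    have "n - v = (u - v) - (u - n)" by simp
    hence "ip (n - v) y = ip (u - v) y - ip (u - n) y" by (simp add: ip_diff1)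
    thus ?thesis using v that assms by (simp add: MA_def ip_sym)
  qed
  have "n - v \<in> NAs" using v assms by simp
  hence "n - v = 0" using h ip_zero NA_L by blast
  thus "v = n" by simp
qed

lemma PM_char: assumes "u \<in> L" "n \<in> NAs" "u - n \<in> MAs" shows "PMo u = u - n"
  unfolding PM_def projL_def
proof (rule the_equality)
  show "u - n \<in> MAs \<and> (\<forall>y\<in>MAs. ip (u - (u - n)) y = 0)"
    using assms by (auto simp: MA_def)
next
  fix v assume v: "v \<in> MAs \<and> (\<forall>y\<in>MAs. ip (u - v) y = 0)"
  have h: "ip ((u - n) - v) y = 0" if "y \<in> MAs" for y
  proof -
    have "(u - n) - v = (u - v) - n" by simp
    hence "ip ((u - n) - v) y = ip (u - v) y - ip n y" by (simp add: ip_diff1)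
    thus ?thesis using v that assms by (simp add: MA_def)
  qed
  have "(u - n) - v \<in> MAs" using v assms by simp
  hence "(u - n) - v = 0" using h ip_zero MA_L by blast
  thus "v = u - n" by simp
qed

lemma PN_E: "u \<in> L \<Longrightarrow> PNo u = E u"
  by (rule PN_char) (auto intro: E_NA E_MA)
lemma PN_in: "u \<in> L \<Longrightarrow> PNo u \<in> NAs"
  by (simp add: PN_E E_NA)
lemma PN_L[simp]: "u \<in> L \<Longrightarrow> PNo u \<in> L"
  using PN_in NA_L by blast
lemma PN_res: "u \<in> L \<Longrightarrow> u - PNo u \<in> MAs"
  by (simp add: PN_E E_MA)
lemma PM_eq: "u \<in> L \<Longrightarrow> PMo u = u - PNo u"
  by (simp add: PN_E) (rule PM_char, auto intro: E_NA E_MA)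
lemma PM_in: "u \<in> L \<Longrightarrow> PMo u \<in> MAs"
  by (simp add: PM_eq PN_res)
lemma PN_NA[simp]: "x \<in> NAs \<Longrightarrow> PNo x = x"
  by (rule PN_char) (auto simp: NA_L MA_def ipL_def)
lemma PN_MA[simp]: "x \<in> MAs \<Longrightarrow> PNo x = 0"
  by (rule PN_char) (simp_all add: MA_L NA_iff)
lemma PM_L[simp]: "u \<in> L \<Longrightarrow> PMo u \<in> L"
  using PM_in MA_L by blast
lemma PN_add[simp]: assumes a: "a \<in> L" and b: "b \<in> L" shows "PNo (a + b) = PNo a + PNo b"
proof (rule PN_char)
  have eq: "a + b - (PNo a + PNo b) = (a - PNo a) + (b - PNo b)" by simp
  show "a + b - (PNo a + PNo b) \<in> MAs" unfolding eq by (rule MA_add[OF PN_res[OF a] PN_res[OF b]])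
qed (use a b in \<open>auto simp: PN_in\<close>)
lemma PN_sc[simp]: assumes a: "a \<in> L" shows "PNo (sc t a) = sc t (PNo a)"
proof (rule PN_char)
  have eq: "sc t a - sc t (PNo a) = sc t (a - PNo a)" by (simp add: fun_eq_iff algebra_simps)
  show "sc t a - sc t (PNo a) \<in> MAs" unfolding eq by (rule MA_sc[OF PN_res[OF a]])
qed (use a in \<open>auto simp: PN_in\<close>)
lemma PN_PN[simp]: "u \<in> L \<Longrightarrow> PNo (PNo u) = PNo u"
  using PN_NA PN_in by blast
lemma PN_uminus[simp]: "a \<in> L \<Longrightarrow> PNo (- a) = - PNo a"
proof -
  assume "a \<in> L"
  have "- a = sc (-1) a" "- PNo a = sc (-1) (PNo a)" by (auto simp: fun_eq_iff)
  thus ?thesis using \<open>a \<in> L\<close> by simp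
qed
lemma PN_diff[simp]: "a \<in> L \<Longrightarrow> b \<in> L \<Longrightarrow> PNo (a - b) = PNo a - PNo b"
  using PN_add[of a "- b"] by simp


lemma sc_zero[simp]: "sc t 0 = 0" by (simp add: fun_eq_iff)

lemma img_tr: "(y \<in> (\<lambda>v. a + v) ` S) = (y - a \<in> (S::'c::ab_group_add set))"
proof
  assume "y \<in> (\<lambda>v. a + v) ` S" thus "y - a \<in> S" by auto
next
  assume "y - a \<in> S"
  moreover have "y = a + (y - a)" by simp
  ultimately show "y \<in> (\<lambda>v. a + v) ` S" by (rule rev_image_eqI)
qed

lemma pw_iff: "y \<in> (\<lambda>v. a + v) ` normal_cone UNIV (\<bullet>) K b \<longleftrightarrow>
   b \<in> K \<and> (\<forall>c\<in>K. (y - a) \<bullet> (c - b) \<le> 0)"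
  unfolding img_tr normal_cone_def by auto

lemma FNC_iff: assumes gL: "g \<in> L" and uL: "u \<in> L"
  shows "g \<in> FNC Xi p C F u \<longleftrightarrow>
     (\<forall>\<xi>\<in>Xi. g \<xi> \<in> (\<lambda>v. F (u \<xi>) \<xi> + v) ` normal_cone UNIV (\<bullet>) (C \<xi>) (u \<xi>))"
proof -
  define v where "v = g - Fcal Xi F u"
  have vL: "v \<in> L" using gL by (simp add: v_def Lspace_def Fcal_def)
  have vxi: "v \<xi> = g \<xi> - F (u \<xi>) \<xi>" if "\<xi> \<in> Xi" for \<xi> using that by (simp add: v_def Fcal_def)
  have uC: "u \<in> Ccal Xi C \<longleftrightarrow> (\<forall>\<xi>\<in>Xi. u \<xi> \<in> C \<xi>)" using uL by (simp add: Ccal_def)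
  have "g \<in> FNC Xi p C F u \<longleftrightarrow> u \<in> Ccal Xi C \<and> (\<forall>c\<in>Ccal Xi C. ip v (c - u) \<le> 0)"
    unfolding FNC_def img_tr normal_cone_def v_def[symmetric] using vL by auto
  also have "\<dots> \<longleftrightarrow> (\<forall>\<xi>\<in>Xi. u \<xi> \<in> C \<xi> \<and> (\<forall>c\<in>C \<xi>. v \<xi> \<bullet> (c - u \<xi>) \<le> 0))"
  proof
    assume H: "u \<in> Ccal Xi C \<and> (\<forall>c\<in>Ccal Xi C. ip v (c - u) \<le> 0)"
    show "\<forall>\<xi>\<in>Xi. u \<xi> \<in> C \<xi> \<and> (\<forall>c\<in>C \<xi>. v \<xi> \<bullet> (c - u \<xi>) \<le> 0)"
    proof (intro ballI conjI)
      fix \<xi>0 assume x0: "\<xi>0 \<in> Xi"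
      show "u \<xi>0 \<in> C \<xi>0" using H uC x0 by blast
      fix c0 assume c0: "c0 \<in> C \<xi>0"
      define c where "c = u(\<xi>0 := c0)"
      have cC: "c \<in> Ccal Xi C" using H uC uL x0 c0 by (auto simp: c_def Ccal_def Lspace_def)
      have "ip v (c - u) = (\<Sum>\<xi>\<in>Xi. if \<xi> = \<xi>0 then p \<xi>0 * (v \<xi>0 \<bullet> (c0 - u \<xi>0)) else 0)"
        unfolding ipL_def by (rule sum.cong) (auto simp: c_def)
      also have "\<dots> = p \<xi>0 * (v \<xi>0 \<bullet> (c0 - u \<xi>0))" using fin x0 by simp
      finally have "ip v (c - u) = p \<xi>0 * (v \<xi>0 \<bullet> (c0 - u \<xi>0))" .
      moreover have "ip v (c - u) \<le> 0" using H cC by blast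
      ultimately have "p \<xi>0 * (v \<xi>0 \<bullet> (c0 - u \<xi>0)) \<le> 0" by simp
      moreover have "p \<xi>0 > 0" using pos x0 by blast
      ultimately show "v \<xi>0 \<bullet> (c0 - u \<xi>0) \<le> 0" by (simp add: mult_le_0_iff)
    qed
  next
    assume H: "\<forall>\<xi>\<in>Xi. u \<xi> \<in> C \<xi> \<and> (\<forall>c\<in>C \<xi>. v \<xi> \<bullet> (c - u \<xi>) \<le> 0)"
    have "ip v (c - u) \<le> 0" if cC: "c \<in> Ccal Xi C" for c
      unfolding ipL_def
    proof (rule sum_nonpos)
      fix \<xi> assume x: "\<xi> \<in> Xi"
      have "c \<xi> \<in> C \<xi>" using cC x by (simp add: Ccal_def)
      hence "v \<xi> \<bullet> (c \<xi> - u \<xi>) \<le> 0" using H x by blast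
      moreover have "p \<xi> \<ge> 0" using pos x by (simp add: less_imp_le)
      ultimately show "p \<xi> * (v \<xi> \<bullet> (c - u) \<xi>) \<le> 0" by (simp add: mult_nonneg_nonpos)
    qed
    thus "u \<in> Ccal Xi C \<and> (\<forall>c\<in>Ccal Xi C. ip v (c - u) \<le> 0)" using H uC by blast
  qed
  also have "\<dots> \<longleftrightarrow> (\<forall>\<xi>\<in>Xi. g \<xi> \<in> (\<lambda>v. F (u \<xi>) \<xi> + v) ` normal_cone UNIV (\<bullet>) (C \<xi>) (u \<xi>))"
    unfolding pw_iff using vxi by auto
  finally show ?thesis .
qed

lemma Aop_PN: "y \<in> L \<Longrightarrow> PNo (Aop Xi p stage r y) = PNo y"
  by (simp add: Aop_def PM_in)
lemma Aop_PM: "y \<in> L \<Longrightarrow> PMo (Aop Xi p stage r y) = sc r (PMo y)"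
  by (simp add: Aop_def PM_eq PM_in fun_eq_iff)
lemma PNPM: "y \<in> L \<Longrightarrow> PNo y + PMo y = y"
  by (simp add: PM_eq)
lemma Aop_inj: assumes "r > 0" "y \<in> L" "y' \<in> L" "Aop Xi p stage r y = Aop Xi p stage r y'"
  shows "y = y'"
proof -
  have 1: "PNo y = PNo y'" using Aop_PN assms by metis
  have "sc r (PMo y) = sc r (PMo y')" using Aop_PM assms by metis
  hence "sc (1/r) (sc r (PMo y)) = sc (1/r) (sc r (PMo y'))" by simp
  hence 2: "PMo y = PMo y'" using assms(1) by (simp add: fun_eq_iff)
  show ?thesis using PNPM[OF assms(2)] PNPM[OF assms(3)] 1 2 by metis
qed


lemma K:
  assumes r: "r > 0" and xN: "x \<in> NAs" and wM: "w \<in> MAs" and xhL: "xh \<in> L" and whL: "wh \<in> L"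
  shows "hippm_ok L ip (ATA Xi p stage C F r) (1 / r) \<sigma> (x - sc (1/r) w)
            (PNo wh - PMo xh - sc (1/r) w) (sc r (x - PNo xh + PMo wh))
         \<longleftrightarrow> ipha_ok Xi p stage C F r \<sigma> x w xh wh"
proof -
  define z where "z = x - sc (1/r) w"
  define zh where "zh = PNo wh - PMo xh - sc (1/r) w"
  define vh where "vh = sc r (x - PNo xh + PMo wh)"
  define a where "a = ipha_a Xi p stage x xh wh"
  define b where "b = ipha_b Xi p stage x xh wh"
  have xL: "x \<in> L" and wL: "w \<in> L" using xN wM NA_L MA_L by auto
  have rnz: "r \<noteq> 0" using r by simp
  have zhL: "zh \<in> L" and vhL: "vh \<in> L" using xL wL xhL whL by (simp_all add: zh_def vh_def)
  have d: "sc (1/r) vh + zh - z = wh - xh"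
    using xL wL xhL whL PNPM[OF xhL] PNPM[OF whL] rnz
    by (simp add: z_def zh_def vh_def fun_eq_iff algebra_simps)
  have ea: "sc (1/r) vh = a"
    using rnz by (simp add: vh_def a_def ipha_a_def fun_eq_iff)
  have eb: "zh - z = - b"
    by (simp add: zh_def z_def b_def ipha_b_def fun_eq_iff)
  have d2: "a + zh - z = wh - xh" using d ea by simp
  have delta_iff: "(let \<delta> = sc (1/r) vh + zh - z in
        ip \<delta> \<delta> \<le> \<sigma>\<^sup>2 * (ip (sc (1/r) vh) (sc (1/r) vh) + ip (zh - z) (zh - z))) \<longleftrightarrow>
     (let \<delta> = wh - xh; a = a; b = b in ip \<delta> \<delta> \<le> \<sigma>\<^sup>2 * (ip a a + ip b b))"
    unfolding ea d2 eb Let_def ip_uminus ..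
  define y0 where "y0 = sc r (x - PNo xh) + PMo wh"
  have y0L: "y0 \<in> L" using xL xhL whL by (simp add: y0_def)
  have Ay0: "Aop Xi p stage r y0 = vh"
    using xL xhL whL xN by (simp add: y0_def vh_def Aop_def PM_eq fun_eq_iff algebra_simps)
  define u where "u = Aop Xi p stage r zh"
  have uL: "u \<in> L" using zhL by (simp add: u_def Aop_def)
  have g1: "PNo y0 + PMo u = sc r (x - xh) - w"
    using xL wL xhL whL xN wM rnz PNPM[OF xhL]
    by (simp add: y0_def u_def Aop_def zh_def PM_eq fun_eq_iff algebra_simps)
  have g2: "PNo u + PMo y0 = wh"
    using xL wL xhL whL xN wM rnz PNPM[OF whL]
    by (simp add: y0_def u_def Aop_def zh_def PM_eq fun_eq_iff algebra_simps)
  have gL: "sc r (x - xh) - w \<in> L" using xL wL xhL by simp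
  have top_iff: "y0 \<in> Top Xi p stage C F u \<longleftrightarrow>
      (\<forall>\<xi>\<in>Xi. r *\<^sub>R (x \<xi> - xh \<xi>) - w \<xi>
         \<in> (\<lambda>v. F (wh \<xi>) \<xi> + v) ` normal_cone UNIV (\<bullet>) (C \<xi>) (wh \<xi>))"
    unfolding Top_def using uL y0L g1 g2 FNC_iff[OF gL whL] by simp
  have mem_iff: "vh \<in> ATA Xi p stage C F r zh \<longleftrightarrow> y0 \<in> Top Xi p stage C F u"
  proof
    assume "vh \<in> ATA Xi p stage C F r zh"
    then obtain y where yT: "y \<in> Top Xi p stage C F u" and vy: "vh = Aop Xi p stage r y"
      unfolding ATA_def u_def by blast
    have yL: "y \<in> L" using yT uL by (simp add: Top_def split: if_splits)
    have "y = y0" using Aop_inj[OF r yL y0L] vy Ay0 by simp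
    thus "y0 \<in> Top Xi p stage C F u" using yT by simp
  next
    assume "y0 \<in> Top Xi p stage C F u"
    thus "vh \<in> ATA Xi p stage C F r zh" unfolding ATA_def u_def[symmetric] using Ay0 by blast
  qed
  show ?thesis
    unfolding z_def[symmetric] zh_def[symmetric] vh_def[symmetric]
    unfolding hippm_ok_def ipha_ok_def mem_iff top_iff delta_iff a_def b_def
    using zhL vhL xhL whL by auto
qed

end

theorem theorem2:
  fixes Xi :: "'b list set" and p :: "'b list \<Rightarrow> real" and N :: nat
    and stage :: "'n::finite \<Rightarrow> nat"
    and C :: "'b list \<Rightarrow> (real^'n) set" and F :: "real^'n \<Rightarrow> 'b list \<Rightarrow> real^'n"
    and r \<sigma>bar \<theta> \<sigma> :: real and x w :: "('b,'n) Lvec"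
  assumes Xi_fin: "finite Xi"
    and Xi_len: "\<forall>\<xi>\<in>Xi. length \<xi> = N"
    and p_pos: "\<forall>\<xi>\<in>Xi. p \<xi> > 0"
    and stage_lt: "\<forall>c. stage c < N"
    and C_ne: "\<forall>\<xi>\<in>Xi. C \<xi> \<noteq> {}" and C_cl: "\<forall>\<xi>\<in>Xi. closed (C \<xi>)"
    and C_cvx: "\<forall>\<xi>\<in>Xi. convex (C \<xi>)"
    and F_cont: "\<forall>\<xi>\<in>Xi. continuous_on UNIV (\<lambda>u. F u \<xi>)"
    and F_mono: "\<forall>\<xi>\<in>Xi. \<forall>u v. (F u \<xi> - F v \<xi>) \<bullet> (u - v) \<ge> 0"
    and r_pos: "r > 0"
    and sbar: "0 < \<sigma>bar" "\<sigma>bar < 1" and th: "0 < \<theta>" "\<theta> < 1"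
    and sig: "0 \<le> \<sigma>" "\<sigma> < \<sigma>bar"
    and xN: "x \<in> NA Xi stage" and wM: "w \<in> MA Xi p stage"
  shows "let z = x - sc (1 / r) w;
             PN' = PN Xi p stage; PM' = PM Xi p stage;
             S = ATA Xi p stage C F r;
             zhat = (\<lambda>xh wh. PN' wh - PM' xh - sc (1 / r) w);
             vhat = (\<lambda>xh wh. sc r (x - PN' xh + PM' wh))
         in x = PN' z \<and> w = sc (- r) (PM' z) \<and>
            (\<forall>zh vh. hippm_ok (Lspace Xi) (ipL Xi p) S (1 / r) \<sigma> z zh vh \<longleftrightarrow>
                (\<exists>xh wh. ipha_ok Xi p stage C F r \<sigma> x w xh wh \<and> zh = zhat xh wh \<and> vh = vhat xh wh)) \<and>
            (\<forall>xh wh. ipha_ok Xi p stage C F r \<sigma> x w xh wh \<longrightarrow>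
                hippm_ok (Lspace Xi) (ipL Xi p) S (1 / r) \<sigma> z (zhat xh wh) (vhat xh wh) \<and>
                (ipha_stop Xi p stage x xh wh \<longleftrightarrow> hippm_stop z (zhat xh wh)) \<and>
                (\<not> ipha_stop Xi p stage x xh wh \<longrightarrow>
                   (\<forall>\<tau>. 1 - \<theta> \<le> \<tau> \<and> \<tau> \<le> 1 + \<theta> \<longrightarrow>
                     (let (x', w') = ipha_update Xi p stage r \<tau> x w xh wh in
                        x' \<in> NA Xi stage \<and> w' \<in> MA Xi p stage \<and>
                        hippm_update (ipL Xi p) \<tau> z (zhat xh wh) (vhat xh wh) = x' - sc (1 / r) w'))))"
proof -
  interpret S: setting Xi p stage using Xi_fin p_pos by unfold_locales
  have xL: "x \<in> Lspace Xi" and wL: "w \<in> Lspace Xi" using xN wM S.NA_L S.MA_L by auto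
  have rnz: "r \<noteq> 0" using r_pos by simp
  define z where "z = x - sc (1 / r) w"
  define zhat where "zhat = (\<lambda>xh wh. PN Xi p stage wh - PM Xi p stage xh - sc (1 / r) w)"
  define vhat where "vhat = (\<lambda>xh wh. sc r (x - PN Xi p stage xh + PM Xi p stage wh))"
  have c1: "x = PN Xi p stage z" using xN wM xL wL by (simp add: z_def)
  have c2: "w = sc (- r) (PM Xi p stage z)" using xN wM xL wL rnz
    by (simp add: z_def S.PM_eq fun_eq_iff)
  have c3: "\<forall>zh vh. hippm_ok (Lspace Xi) (ipL Xi p) (ATA Xi p stage C F r) (1 / r) \<sigma> z zh vh \<longleftrightarrow>
                (\<exists>xh wh. ipha_ok Xi p stage C F r \<sigma> x w xh wh \<and> zh = zhat xh wh \<and> vh = vhat xh wh)"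
  proof (intro allI iffI)
    fix zh vh assume H: "hippm_ok (Lspace Xi) (ipL Xi p) (ATA Xi p stage C F r) (1 / r) \<sigma> z zh vh"
    have zhL: "zh \<in> Lspace Xi" and vhL: "vh \<in> Lspace Xi" using H by (auto simp: hippm_ok_def)
    define wh where "wh = PN Xi p stage zh + sc (1/r) (PM Xi p stage vh)"
    define xh where "xh = x - sc (1/r) (PN Xi p stage vh) - PM Xi p stage zh - sc (1/r) w"
    have whL: "wh \<in> Lspace Xi" and xhL: "xh \<in> Lspace Xi" using zhL vhL xL wL
      by (simp_all add: wh_def xh_def)
    have e1: "zh = zhat xh wh"
      using zhL vhL xL wL xN wM rnz S.PNPM[OF zhL]
      by (simp add: zhat_def wh_def xh_def S.PM_eq S.PM_in fun_eq_iff algebra_simps)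
    have e2: "vh = vhat xh wh"
      using zhL vhL xL wL xN wM rnz S.PNPM[OF vhL]
      by (simp add: vhat_def wh_def xh_def S.PM_eq S.PM_in fun_eq_iff algebra_simps)
    have "ipha_ok Xi p stage C F r \<sigma> x w xh wh"
      using S.K[OF r_pos xN wM xhL whL, of C F \<sigma>] H e1 e2
      by (simp add: z_def zhat_def vhat_def)
    thus "\<exists>xh wh. ipha_ok Xi p stage C F r \<sigma> x w xh wh \<and> zh = zhat xh wh \<and> vh = vhat xh wh"
      using e1 e2 by blast
  next
    fix zh vh assume "\<exists>xh wh. ipha_ok Xi p stage C F r \<sigma> x w xh wh \<and> zh = zhat xh wh \<and> vh = vhat xh wh"
    then obtain xh wh where ok: "ipha_ok Xi p stage C F r \<sigma> x w xh wh" and e: "zh = zhat xh wh" "vh = vhat xh wh"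
      by blast
    have xhL: "xh \<in> Lspace Xi" and whL: "wh \<in> Lspace Xi" using ok by (auto simp: ipha_ok_def)
    show "hippm_ok (Lspace Xi) (ipL Xi p) (ATA Xi p stage C F r) (1 / r) \<sigma> z zh vh"
      using S.K[OF r_pos xN wM xhL whL, of C F \<sigma>] ok e
      by (simp add: z_def zhat_def vhat_def)
  qed
  have c4: "\<forall>xh wh. ipha_ok Xi p stage C F r \<sigma> x w xh wh \<longrightarrow>
                hippm_ok (Lspace Xi) (ipL Xi p) (ATA Xi p stage C F r) (1 / r) \<sigma> z (zhat xh wh) (vhat xh wh) \<and>
                (ipha_stop Xi p stage x xh wh \<longleftrightarrow> hippm_stop z (zhat xh wh)) \<and>
                (\<not> ipha_stop Xi p stage x xh wh \<longrightarrow>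
                   (\<forall>\<tau>. 1 - \<theta> \<le> \<tau> \<and> \<tau> \<le> 1 + \<theta> \<longrightarrow>
                     (let (x', w') = ipha_update Xi p stage r \<tau> x w xh wh in
                        x' \<in> NA Xi stage \<and> w' \<in> MA Xi p stage \<and>
                        hippm_update (ipL Xi p) \<tau> z (zhat xh wh) (vhat xh wh) = x' - sc (1 / r) w')))"
  proof (intro allI impI conjI)
    fix xh wh assume ok: "ipha_ok Xi p stage C F r \<sigma> x w xh wh"
    have xhL: "xh \<in> Lspace Xi" and whL: "wh \<in> Lspace Xi" using ok by (auto simp: ipha_ok_def)
    show "hippm_ok (Lspace Xi) (ipL Xi p) (ATA Xi p stage C F r) (1 / r) \<sigma> z (zhat xh wh) (vhat xh wh)"
      using S.K[OF r_pos xN wM xhL whL, of C F \<sigma>] ok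
      by (simp add: z_def zhat_def vhat_def)
    define a where "a = ipha_a Xi p stage x xh wh"
    define b where "b = ipha_b Xi p stage x xh wh"
    have zb: "zhat xh wh = z - b" by (simp add: zhat_def z_def b_def ipha_b_def fun_eq_iff)
    have va: "vhat xh wh = sc r a" by (simp add: vhat_def a_def ipha_a_def)
    show "ipha_stop Xi p stage x xh wh \<longleftrightarrow> hippm_stop z (zhat xh wh)"
      unfolding ipha_stop_def hippm_stop_def zb b_def[symmetric] by auto
    fix \<tau> assume "\<not> ipha_stop Xi p stage x xh wh" "1 - \<theta> \<le> \<tau> \<and> \<tau> \<le> 1 + \<theta>"
    define \<alpha> where "\<alpha> = ipL Xi p a b / ipL Xi p a a"
    have upd: "ipha_update Xi p stage r \<tau> x w xh wh =
        (x - sc (\<tau> * \<alpha>) (x - PN Xi p stage xh), w + sc (\<tau> * \<alpha> * r) (PM Xi p stage wh))"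
      by (simp add: ipha_update_def a_def b_def \<alpha>_def Let_def)
    have ak: "ipL Xi p (vhat xh wh) (z - zhat xh wh) / ipL Xi p (vhat xh wh) (vhat xh wh) = \<alpha> / r"
      unfolding va zb \<alpha>_def using rnz
      by (simp add: S.ip_sc1 S.ip_sc2)
    have hu: "hippm_update (ipL Xi p) \<tau> z (zhat xh wh) (vhat xh wh) = z - sc (\<tau> * \<alpha>) a"
      unfolding hippm_update_def Let_def ak unfolding va using rnz by (simp add: fun_eq_iff)
    have fin: "z - sc (\<tau> * \<alpha>) a =
      (x - sc (\<tau> * \<alpha>) (x - PN Xi p stage xh)) - sc (1 / r) (w + sc (\<tau> * \<alpha> * r) (PM Xi p stage wh))"
      using rnz by (simp add: z_def a_def ipha_a_def fun_eq_iff algebra_simps)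
    show "let (x', w') = ipha_update Xi p stage r \<tau> x w xh wh in
                        x' \<in> NA Xi stage \<and> w' \<in> MA Xi p stage \<and>
                        hippm_update (ipL Xi p) \<tau> z (zhat xh wh) (vhat xh wh) = x' - sc (1 / r) w'"
      unfolding upd hu fin using xN wM S.PN_in[OF xhL] S.PM_in[OF whL] by simp
  qed
  show ?thesis unfolding Let_def
    using c1 c2 c3 c4 unfolding z_def zhat_def vhat_def Let_def by blast
qed

end
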